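(* There exist absolute constants $w_0>0$ and $c>0$ such that for every $w\ge w_0$ the following holds. Let $\tilde x:[0,1]\to\mathbb R$ solve the guided ODE $$\tilde x'(s)=(w+1)-w\tanh\bigl(s\,\tilde x(s)\bigr),\qquad \tilde x(0)=x,$$ with random initialization $x\sim\mathcal N(0,1)$. Then $$\Pr[\tilde x(1)\ge0]\ge1-e^{-cw^2}\qquad\text{and}\qquad \Pr\Bigl[\tilde x(1)\ge\frac{\sqrt{w+1}}{4}\Bigr]\ge1-e^{-cw}.$$
   Context: This ODE is the guided probability flow ODE with guidance parameter $w$, guided toward the component $z=+1$, for the Gaussian mixture $\frac12\mathcal N(1,1)+\frac12\mathcal N(-1,1)$ on $\mathbb R$: in the original time variable $t\in[0,T]$ with $a_t=e^{t-T}$, it reads $x'(t)=x(t)-(w+1)(x(t)-a_t)+w\bigl(x(t)-a_t\tanh(a_tx(t))\bigr)$ with $x(0)\sim\mathcal N(0,1)$; the displayed ODE is obtained via the change of variables $s=a_t$, $\tilde x(s)=x(T+\ln s)$ and letting $T\to\infty$, so that $s$ ranges over $[0,1]$ and $\tilde x(1)$ is the output sample. *)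

theory Defs
  imports "HOL-Probability.Probability"
begin

definition guided_sol :: "real \<Rightarrow> (real \<Rightarrow> real) \<Rightarrow> real \<Rightarrow> bool" where
  "guided_sol w y x \<longleftrightarrow> y 0 = x \<and>
     (\<forall>s\<in>{0..1}. (y has_real_derivative ((w + 1) - w * tanh (s * y s))) (at s within {0..1}))"

definition std_gaussian :: "real measure" where
  "std_gaussian = density lborel std_normal_density"

end

theory Submission
  imports Defs
begin


lemma lb_mvt:
  fixes f f' :: "real \<Rightarrow> real"
  assumes "a \<le> b" "continuous_on {a..b} f"
    "\<And>x. a < x \<Longrightarrow> x < b \<Longrightarrow> (f has_real_derivative f' x) (at x)"
    "\<And>x. a < x \<Longrightarrow> x < b \<Longrightarrow> f' x \<ge> k"
  shows "f b - f a \<ge> k * (b - a)"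
proof (cases "a = b")
  case True then show ?thesis by simp
next
  case False
  then have ab: "a < b" using assms(1) by simp
  obtain l z where z: "a < z" "z < b" "DERIV f z :> l" "f b - f a = (b - a) * l"
    using MVT[OF ab assms(2)] assms(3) real_differentiable_def by blast
  have "l = f' z" using DERIV_unique[OF z(3) assms(3)[OF z(1,2)]] .
  then have "l \<ge> k" using assms(4)[OF z(1,2)] by simp
  then show ?thesis using z(4) ab by (simp add: mult.commute mult_right_mono)
qed

context
  fixes w :: real and y :: "real \<Rightarrow> real" and x :: real
  assumes sol: "guided_sol w y x" and w0: "w \<ge> 0"
begin

lemma y0: "y 0 = x" using sol unfolding guided_sol_def by simp

lemma yderiv: "s \<in> {0..1} \<Longrightarrow> (y has_real_derivative ((w + 1) - w * tanh (s * y s))) (at s within {0..1})"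
  using sol unfolding guided_sol_def by simp

lemma ycont: "continuous_on {a..b} y" if "0 \<le> a" "b \<le> 1"
proof -
  have "continuous_on {0..1} y" by (rule DERIV_continuous_on[OF yderiv])
  then show ?thesis by (rule continuous_on_subset) (use that in auto)
qed

lemma yderiv_at: "0 < s \<Longrightarrow> s < 1 \<Longrightarrow> (y has_real_derivative ((w + 1) - w * tanh (s * y s))) (at s)"
  using yderiv[of s] at_within_Icc_at[of 0 s 1] by simp

lemma ylb: 
  assumes "0 \<le> a" "a \<le> b" "b \<le> 1" "\<And>s. a < s \<Longrightarrow> s < b \<Longrightarrow> (w + 1) - w * tanh (s * y s) \<ge> k"
  shows "y b - y a \<ge> k * (b - a)"
  by (rule lb_mvt[OF assms(2) ycont[OF assms(1,3)], where f'="\<lambda>s. (w + 1) - w * tanh (s * y s)"])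
     (use assms yderiv_at in auto)

lemma ymono: assumes "0 \<le> a" "a \<le> b" "b \<le> 1" shows "y a \<le> y b"
proof -
  have "y b - y a \<ge> 0 * (b - a)"
  proof (rule ylb[OF assms])
    fix s
    have "w * tanh (s * y s) \<le> w * 1" using w0 tanh_real_lt_1[of "s * y s"]
      by (intro mult_left_mono) auto
    then show "(w + 1) - w * tanh (s * y s) \<ge> 0" by simp
  qed
  then show ?thesis by simp
qed

lemma part1: assumes "x \<ge> -(w+1)" shows "y 1 \<ge> 0"
proof (rule ccontr)
  assume "\<not> y 1 \<ge> 0"
  then have neg: "y s < 0" if "0 \<le> s" "s \<le> 1" for s using ymono[OF that] by simp
  have "y 1 - y 0 \<ge> (w+1) * (1 - 0)"
  proof (rule ylb)
    fix s :: real assume "0 < s" "s < 1"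
    then have "s * y s \<le> 0" using neg[of s] by (simp add: mult_nonneg_nonpos)
    then have "tanh (s * y s) \<le> tanh 0" by simp
    then have "w * tanh (s * y s) \<le> 0" using w0 by (simp add: mult_nonneg_nonpos)
    then show "(w + 1) - w * tanh (s * y s) \<ge> w + 1" by simp
  qed auto
  then show False using y0 assms \<open>\<not> y 1 \<ge> 0\<close> by simp
qed

lemma tanh_half: "tanh (1/2::real) \<le> 1/2"
proof -
  have "tanh (1/2::real) = (exp 1 - 1) / (exp 1 + 1)"
  proof -
    have "tanh (1/2::real) = (1 - exp (-1)) / (1 + exp (-1))" by (simp add: tanh_real_altdef)
    also have "\<dots> = (exp 1 - 1) / (exp 1 + 1)"
    proof -
      have e: "exp (1::real) > 0" by simp
      have "(1 - exp (-1)) / (1 + exp (-1)) = ((1 - exp (-1)) * exp 1) / ((1 + exp (-1)) * exp (1::real))"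
        using e by simp
      also have "\<dots> = (exp 1 - 1) / (exp 1 + 1)"
        by (simp add: algebra_simps exp_minus)
      finally show ?thesis .
    qed
    finally show ?thesis .
  qed
  also have "\<dots> \<le> 1/2" using exp_le apply (simp add: divide_simps) using exp_gt_zero[of "1::real"] by linarith
  finally show ?thesis .
qed

lemma part2: assumes "w \<ge> 3" "x \<ge> - sqrt (w+1) / 4" shows "y 1 \<ge> sqrt (w+1) / 4"
proof (rule ccontr)
  define b where "b = sqrt (w+1) / 4"
  define d where "d = 1 / (2 * b)"
  have r2: "sqrt (w+1) ^ 2 = w + 1" using w0 by simp
  have bpos: "b \<ge> 1/2" unfolding b_def using assms(1) real_sqrt_le_mono[of 4 "w+1"] by simp
  then have d: "0 \<le> d" "d \<le> 1" unfolding d_def by (auto simp: field_simps)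
  assume "\<not> y 1 \<ge> sqrt (w+1) / 4"
  then have lt: "y s < b" if "0 \<le> s" "s \<le> 1" for s using ymono[OF that] b_def by simp
  have "y d - y 0 \<ge> (w/2) * (d - 0)"
  proof (rule ylb)
    fix s :: real assume s: "0 < s" "s < d"
    then have "s * y s \<le> s * b" using lt[of s] d by (intro mult_left_mono) auto
    also have "\<dots> \<le> d * b" using s bpos by (intro mult_right_mono) auto
    also have "\<dots> = 1/2" unfolding d_def using bpos by simp
    finally have "tanh (s * y s) \<le> tanh (1/2)" by (simp only: tanh_real_le_iff)
    then have "tanh (s * y s) \<le> 1/2" using tanh_half by linarith
    then have "w * tanh (s * y s) \<le> w * (1/2)" using w0 by (intro mult_left_mono) auto
    then show "(w + 1) - w * tanh (s * y s) \<ge> w/2" by simp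
  qed (use d in auto)
  moreover have "y d \<le> y 1" using ymono d by simp
  ultimately have "y 1 \<ge> x + w / (4 * b)" using y0 unfolding d_def by simp
  moreover have "w / (4 * b) = w / sqrt (w+1)" unfolding b_def by simp
  moreover have "w / sqrt (w+1) \<ge> sqrt (w+1) / 2"
  proof -
    have "sqrt (w+1) > 0" using w0 by simp
    then show ?thesis using r2 assms(1) by (simp add: field_simps power2_eq_square)
  qed
  ultimately have "y 1 \<ge> sqrt (w+1) / 4" using assms(2) by linarith
  then show False using \<open>\<not> y 1 \<ge> sqrt (w+1) / 4\<close> by simp
qed

end



lemma compare:
  assumes s1: "guided_sol w y1 x1" and s2: "guided_sol w y2 x2" and w0: "w \<ge> 0" and x: "x1 \<le> x2"
  shows "y1 1 \<le> y2 1"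
proof (rule ccontr)
  assume nc: "\<not> y1 1 \<le> y2 1"
  define d where "d = (\<lambda>s. y1 s - y2 s)"
  have cd: "continuous_on {0..1} d" unfolding d_def
    using ycont[OF s1 w0, of 0 1] ycont[OF s2 w0, of 0 1] by (intro continuous_intros) auto
  define K where "K = {0..1} \<inter> d -` {..0}"
  have "closed K" unfolding K_def by (rule continuous_closed_preimage[OF cd]) auto
  moreover have "bounded K" unfolding K_def by (rule bounded_subset[of "{0..1}"]) auto
  ultimately have "compact K" using compact_eq_bounded_closed by blast
  moreover have "0 \<in> K" unfolding K_def d_def using y0[OF s1 w0] y0[OF s2 w0] x by simp
  ultimately obtain a where a: "a \<in> K" "\<And>s. s \<in> K \<Longrightarrow> s \<le> a"
    using compact_attains_sup[of K] by blast
  have a01: "0 \<le> a" "a \<le> 1" and da: "d a \<le> 0" using a(1) unfolding K_def by auto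
  have pos: "d s > 0" if "a < s" "s \<le> 1" for s
    using a(2)[of s] that a01 unfolding K_def by force
  have "(\<lambda>s. - d s) 1 - (\<lambda>s. - d s) a \<ge> 0 * (1 - a)"
  proof (rule lb_mvt[where f'="\<lambda>s. - (((w + 1) - w * tanh (s * y1 s)) - ((w + 1) - w * tanh (s * y2 s)))"])
    show "a \<le> 1" by fact
    show "continuous_on {a..1} (\<lambda>s. - d s)"
      using cd by (intro continuous_intros) (rule continuous_on_subset[OF cd], use a01 in auto)
  next
    fix s assume s: "a < s" "s < 1"
    then have s0: "0 < s" using a01 by simp
    show "((\<lambda>s. - d s) has_real_derivative
         - (((w + 1) - w * tanh (s * y1 s)) - ((w + 1) - w * tanh (s * y2 s)))) (at s)"
      unfolding d_def using yderiv_at[OF s1 w0 s0 s(2)] yderiv_at[OF s2 w0 s0 s(2)]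
      by (intro derivative_intros) auto
    have "y2 s < y1 s" using pos[of s] s unfolding d_def by simp
    then have "s * y2 s \<le> s * y1 s" using s0 by (intro mult_left_mono) auto
    then have "tanh (s * y2 s) \<le> tanh (s * y1 s)" by simp
    then have "w * tanh (s * y2 s) \<le> w * tanh (s * y1 s)" using w0 by (intro mult_left_mono) auto
    then show "0 \<le> - (((w + 1) - w * tanh (s * y1 s)) - ((w + 1) - w * tanh (s * y2 s)))" by simp
  qed
  then have "d 1 \<le> d a" by simp
  then show False using da nc unfolding d_def by simp
qed


lemma gauss_sets: "sets std_gaussian = sets borel"
  unfolding std_gaussian_def by simp

lemma gauss_prob: "prob_space std_gaussian"
  unfolding std_gaussian_def by (rule prob_space_normal_density) simp

lemma gauss_tail:
  assumes t: "t \<ge> 2"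
  shows "measure std_gaussian {x. x < -t} \<le> exp (- t\<^sup>2 / 8)"
proof -
  define C where "C = sqrt 2 * exp (- t\<^sup>2 / 4)"
  define nd where "nd = normal_density 0 (sqrt 2)"
  have C0: "C \<ge> 0" unfolding C_def by simp
  have A: "{x::real. x < -t} \<in> sets borel" by measurable
  have pt: "std_normal_density x \<le> C * nd x" if "x < -t" for x
  proof -
    have "t\<^sup>2 \<le> x\<^sup>2"
    proof -
      have "t ^ 2 \<le> (-x) ^ 2" using that t by (intro power_mono) auto
      then show ?thesis by simp
    qed
    then have e: "exp (- x\<^sup>2 / 2) \<le> exp (- t\<^sup>2 / 4) * exp (- x\<^sup>2 / 4)"
      unfolding exp_add[symmetric] by simp
    have sq: "sqrt (2 * pi * 2) = sqrt 2 * sqrt (2 * pi)"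
      by (simp add: real_sqrt_mult[symmetric] mult.commute)
    have "C * nd x = exp (- t\<^sup>2 / 4) * exp (- x\<^sup>2 / 4) / sqrt (2 * pi)"
      unfolding C_def nd_def normal_density_def using sq by simp
    moreover have "std_normal_density x = exp (- x\<^sup>2 / 2) / sqrt (2 * pi)"
      by (simp add: std_normal_density_def)
    ultimately show ?thesis using e by (simp add: divide_right_mono)
  qed
  have "emeasure std_gaussian {x. x < -t} = (\<integral>\<^sup>+x. ennreal (std_normal_density x) * indicator {x. x < -t} x \<partial>lborel)"
    unfolding std_gaussian_def using A by (simp add: emeasure_density nn_integral_set_ennreal)
  also have "\<dots> \<le> (\<integral>\<^sup>+x. ennreal C * ennreal (nd x) \<partial>lborel)"
  proof (rule nn_integral_mono)
    fix x
    show "ennreal (std_normal_density x) * indicator {x. x < - t} x \<le> ennreal C * ennreal (nd x)"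
      using pt[of x] C0 by (auto simp: indicator_def ennreal_mult[symmetric] nd_def)
  qed
  also have "\<dots> = ennreal C * (\<integral>\<^sup>+x. ennreal (nd x) \<partial>lborel)"
    by (rule nn_integral_cmult) (simp add: nd_def)
  also have "(\<integral>\<^sup>+x. ennreal (nd x) \<partial>lborel) = 1"
    unfolding nd_def by (subst nn_integral_eq_integral) auto
  finally have "ennreal (measure std_gaussian {x. x < -t}) \<le> ennreal C"
    using finite_measure.emeasure_eq_measure[OF prob_space.finite_measure[OF gauss_prob]] by simp
  then have m: "measure std_gaussian {x. x < -t} \<le> C" using C0 by simp
  have "sqrt 2 \<le> exp (t\<^sup>2 / 8)"
  proof -
    have "2 * 2 \<le> t * t" using t by (intro mult_mono) auto
    then have "t\<^sup>2 \<ge> 4" by (simp add: power2_eq_square)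
    then have "1 + t\<^sup>2/8 \<ge> 3/2" by simp
    moreover have "exp (t\<^sup>2/8) \<ge> 1 + t\<^sup>2/8" by (rule exp_ge_add_one_self)
    moreover have "sqrt 2 \<le> 3/2" by (rule real_le_lsqrt) (auto simp: power2_eq_square)
    ultimately show ?thesis by linarith
  qed
  then have "C \<le> exp (t\<^sup>2 / 8) * exp (- t\<^sup>2 / 4)" unfolding C_def
    by (intro mult_right_mono) auto
  also have "\<dots> = exp (- t\<^sup>2 / 8)" unfolding exp_add[symmetric] by simp
  finally show ?thesis using m by simp
qed


lemma gauss_lower:
  assumes T: "T \<ge> 2" and S: "S \<in> sets borel" and sub: "{x. x \<ge> -T} \<subseteq> S"
  shows "measure std_gaussian S \<ge> 1 - exp (- T\<^sup>2 / 8)"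
proof -
  interpret prob_space std_gaussian by (rule gauss_prob)
  have sp: "space std_gaussian = UNIV" unfolding std_gaussian_def by simp
  have A: "{x::real. x < -T} \<in> sets std_gaussian" unfolding gauss_sets by measurable
  have "space std_gaussian - {x. x < -T} = {x. x \<ge> -T}" using sp by auto
  then have "prob {x. x \<ge> -T} = 1 - prob {x. x < -T}" using prob_compl[OF A] by simp
  moreover have "prob {x. x \<ge> -T} \<le> prob S"
    by (rule finite_measure_mono[OF sub]) (simp add: gauss_sets S)
  ultimately show ?thesis using gauss_tail[OF T] by simp
qed

lemma main_part:
  fixes w :: real and X :: "real \<Rightarrow> real \<Rightarrow> real"
  assumes w: "100 \<le> w" and H: "\<forall>x. guided_sol w (X x) x"
  shows "measure std_gaussian {x. X x 1 \<ge> 0} \<ge> 1 - exp (- (1/128) * w\<^sup>2) \<and>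
         measure std_gaussian {x. X x 1 \<ge> sqrt (w + 1) / 4} \<ge> 1 - exp (- (1/128) * w)"
proof -
  have w0: "w \<ge> 0" using w by simp
  define g where "g = (\<lambda>x. X x 1)"
  have "mono g" unfolding g_def mono_def using compare[OF _ _ w0] H by blast
  have gset: "{x. g x \<ge> v} = {x. X x 1 \<ge> v}" for v by (simp add: g_def)
  from \<open>mono g\<close> have gm: "g \<in> borel_measurable borel" by (rule borel_measurable_mono)
  have sets: "{x. g x \<ge> v} \<in> sets borel" for v
  proof -
    have "g -` {v..} \<inter> space borel \<in> sets borel" by (rule measurable_sets[OF gm]) auto
    moreover have "g -` {v..} \<inter> space borel = {x. g x \<ge> v}" by auto
    ultimately show ?thesis by simp
  qed
  have "measure std_gaussian {x. g x \<ge> 0} \<ge> 1 - exp (- (w+1)\<^sup>2 / 8)"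
  proof (rule gauss_lower[OF _ sets])
    show "2 \<le> w + 1" using w by simp
    show "{x. x \<ge> -(w+1)} \<subseteq> {x. g x \<ge> 0}"
    proof
      fix x assume "x \<in> {x. x \<ge> -(w+1)}"
      then show "x \<in> {x. g x \<ge> 0}" using part1[OF H[rule_format, of x] w0] unfolding g_def by simp
    qed
  qed
  moreover have "exp (- (w+1)\<^sup>2 / 8) \<le> exp (- (1/128) * w\<^sup>2)"
  proof -
    have "w\<^sup>2 \<le> (w+1)\<^sup>2" using w0 by (intro power_mono) auto
    then have "- (w+1)\<^sup>2 / 8 \<le> - (1/128) * w\<^sup>2" using zero_le_power2[of w] by linarith
    then show ?thesis by (simp only: exp_le_cancel_iff)
  qed
  ultimately have "measure std_gaussian {x. g x \<ge> 0} \<ge> 1 - exp (- (1/128) * w\<^sup>2)"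
    by linarith
  then have p1: "measure std_gaussian {x. X x 1 \<ge> 0} \<ge> 1 - exp (- (1/128) * w\<^sup>2)"
    by (simp only: gset)
  have r: "sqrt (w+1) \<ge> 8" using w real_sqrt_le_mono[of 64 "w+1"] by simp
  have r2: "sqrt (w+1) ^ 2 = w + 1" using w0 by simp
  have "measure std_gaussian {x. g x \<ge> sqrt (w + 1) / 4} \<ge> 1 - exp (- (sqrt (w+1) / 4)\<^sup>2 / 8)"
  proof (rule gauss_lower[OF _ sets])
    show "2 \<le> sqrt (w+1) / 4" using r by simp
    show "{x. x \<ge> -(sqrt (w+1) / 4)} \<subseteq> {x. g x \<ge> sqrt (w+1) / 4}"
    proof
      fix x assume "x \<in> {x. x \<ge> -(sqrt (w+1) / 4)}"
      then show "x \<in> {x. g x \<ge> sqrt (w+1) / 4}"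
        using part2[OF H[rule_format, of x] w0, of] w unfolding g_def by simp
    qed
  qed
  moreover have "exp (- (sqrt (w+1) / 4)\<^sup>2 / 8) \<le> exp (- (1/128) * w)"
  proof -
    have "(sqrt (w+1) / 4)\<^sup>2 = (w+1) / 16" using r2 by (simp add: power_divide)
    then have "- (sqrt (w+1) / 4)\<^sup>2 / 8 \<le> - (1/128) * w" by simp
    then show ?thesis by (simp only: exp_le_cancel_iff)
  qed
  ultimately have "measure std_gaussian {x. g x \<ge> sqrt (w + 1) / 4} \<ge> 1 - exp (- (1/128) * w)"
    by linarith
  then have p2: "measure std_gaussian {x. X x 1 \<ge> sqrt (w + 1) / 4} \<ge> 1 - exp (- (1/128) * w)"
    by (simp only: gset)
  show ?thesis using p1 p2 by blast
qed


theorem theorem4p1: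
  shows "\<exists>w0 > 0. \<exists>c > 0. \<forall>w \<ge> w0. \<forall>X :: real \<Rightarrow> real \<Rightarrow> real.
           (\<forall>x. guided_sol w (X x) x) \<longrightarrow>
             measure std_gaussian {x. X x 1 \<ge> 0} \<ge> 1 - exp (- c * w\<^sup>2) \<and>
             measure std_gaussian {x. X x 1 \<ge> sqrt (w + 1) / 4} \<ge> 1 - exp (- c * w)"
  apply (rule exI[where x="100::real"])
  apply (rule conjI, simp)
  apply (rule exI[where x="1/128::real"])
  apply (rule conjI, simp)
  using main_part by blast


end
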